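(* Let $\mu\in\mathcal P_c^*(\mathbb R^2)$. Then $\mathcal N_{\mathrm m}[\mu]\in L^\infty_\rho(\mathbb R)$.
   Context: $\mathbb S_1=\{x\in\mathbb R^2:\|x\|=1\}$; $\mathcal R_\theta[\mu]=(\langle\cdot,\theta\rangle)_\#\mu$. Fix a reference Borel probability measure $\rho$ on $\mathbb R$ without atoms. For a probability measure $\nu$ on $\mathbb R$ with $F_\nu(t)=\nu((-\infty,t])$, $F_\nu^{[-1]}(t)=\inf\{s:F_\nu(s)>t\}$ and the CDT is $\hat\nu=F_\nu^{[-1]}\circ F_\rho$; $\widehat{\mathcal R}_\theta[\mu]$ is the CDT of $\mathcal R_\theta[\mu]$. For $g\in L^2_\rho(\mathbb R)$, $\operatorname{mean}(g)=\int g\,\mathrm d\rho$, $\operatorname{std}(g)=(\int|g-\operatorname{mean}(g)|^2\mathrm d\rho)^{1/2}$. $\mathcal P_c^*(\mathbb R^2)$ is the set of compactly supported Borel probability measures on $\mathbb R^2$ whose support has affine hull of dimension $>1$. For such $\mu$: $\mathcal N_\theta[\mu](t)=\big(\widehat{\mathcal R}_\theta[\mu](t)-\operatorname{mean}(\widehat{\mathcal R}_\theta[\mu])\big)/\operatorname{std}(\widehat{\mathcal R}_\theta[\mu])$ and the max-normalized R-CDT is $\mathcal N_{\mathrm m}[\mu](t)=\sup_{\theta\in\mathbb S_1}\mathcal N_\theta[\mu](t)$, $t\in\mathbb R$. *)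

theory Defs
  imports "HOL-Analysis.Analysis" "HOL-Probability.Probability"
begin

definition S1 :: "(real^2) set" where
  "S1 = {x. norm x = 1}"

definition msupp :: "'a::metric_space measure \<Rightarrow> 'a set" where
  "msupp M = {x. \<forall>e>0. emeasure M (ball x e) > 0}"

definition Pc_star :: "(real^2) measure set" where
  "Pc_star = {\<mu>. prob_space \<mu> \<and> sets \<mu> = sets borel \<and> compact (msupp \<mu>) \<and> aff_dim (msupp \<mu>) > 1}"

definition radon :: "real^2 \<Rightarrow> (real^2) measure \<Rightarrow> real measure" where
  "radon \<theta> \<mu> = distr \<mu> borel (\<lambda>x. inner x \<theta>)"

definition cdf_of :: "real measure \<Rightarrow> real \<Rightarrow> real" where
  "cdf_of \<nu> t = measure \<nu> {..t}"

definition gen_inv :: "(real \<Rightarrow> real) \<Rightarrow> real \<Rightarrow> real" where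
  "gen_inv F t = Inf {s. F s > t}"

definition cdt :: "real measure \<Rightarrow> real measure \<Rightarrow> real \<Rightarrow> real" where
  "cdt \<rho> \<nu> = gen_inv (cdf_of \<nu>) \<circ> cdf_of \<rho>"

definition mean_rho :: "real measure \<Rightarrow> (real \<Rightarrow> real) \<Rightarrow> real" where
  "mean_rho \<rho> g = (\<integral>t. g t \<partial>\<rho>)"

definition std_rho :: "real measure \<Rightarrow> (real \<Rightarrow> real) \<Rightarrow> real" where
  "std_rho \<rho> g = sqrt (\<integral>t. (g t - mean_rho \<rho> g)\<^sup>2 \<partial>\<rho>)"

definition Ntheta :: "real measure \<Rightarrow> real^2 \<Rightarrow> (real^2) measure \<Rightarrow> real \<Rightarrow> real" where
  "Ntheta \<rho> \<theta> \<mu> t =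
     (cdt \<rho> (radon \<theta> \<mu>) t - mean_rho \<rho> (cdt \<rho> (radon \<theta> \<mu>))) / std_rho \<rho> (cdt \<rho> (radon \<theta> \<mu>))"

text \<open>Max-normalized R-CDT; the supremum is taken in the extended reals so that it is always defined.\<close>
definition Nmax :: "real measure \<Rightarrow> (real^2) measure \<Rightarrow> real \<Rightarrow> ereal" where
  "Nmax \<rho> \<mu> t = (SUP \<theta>\<in>S1. ereal (Ntheta \<rho> \<theta> \<mu> t))"

definition Linf :: "real measure \<Rightarrow> (real \<Rightarrow> ereal) \<Rightarrow> bool" where
  "Linf \<rho> f \<longleftrightarrow> f \<in> borel_measurable \<rho> \<and> (\<exists>C::real. AE t in \<rho>. \<bar>f t\<bar> \<le> ereal C)"

end

theory Submission
  imports Defs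
begin

lemma cdf_lt_measure:
  assumes rd: "real_distribution \<rho>" and atom: "\<And>x. measure \<rho> {x} = 0"
    and p: "0 < p" "p \<le> 1"
  shows "measure \<rho> {t. cdf \<rho> t < p} = p"
proof -
  interpret real_distribution \<rho> by fact
  let ?F = "cdf \<rho>"
  have cont: "\<And>x. isCont ?F x" using atom isCont_cdf by blast
  have mono: "\<And>x y. x \<le> y \<Longrightarrow> ?F x \<le> ?F y" by (rule cdf_nondecreasing)
  have "\<forall>\<^sub>F x in at_bot. ?F x < p"
    using order_tendstoD(2)[OF cdf_lim_at_bot p(1)] .
  then obtain t1 where t1: "?F t1 < p" using eventually_happens' by (metis eventually_at_bot_linorder order_refl)
  show ?thesis
  proof (cases "\<forall>t. ?F t < p")
    case True
    have "1 \<le> p"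
      using cdf_lim_at_top_prob by (rule tendsto_upperbound) (use True in \<open>auto intro!: always_eventually less_imp_le\<close>)
    have "measure \<rho> UNIV = 1" by (metis prob_space space_eq_univ)
    have "p = 1" using p \<open>1 \<le> p\<close> by linarith
    have "{t. ?F t < p} = UNIV" using True by blast
    then show ?thesis using \<open>p = 1\<close> \<open>measure \<rho> UNIV = 1\<close> by (metis)
  next
    case False
    then obtain t0 where t0: "p \<le> ?F t0" by (auto simp: not_less)
    define A where "A = {t. p \<le> ?F t}"
    have Ane: "A \<noteq> {}" using t0 A_def by auto
    have Aclosed: "closed A" unfolding A_def
      by (intro closed_Collect_le continuous_intros) (simp add: continuous_on_eq_continuous_at cont)
    have Abdd: "bdd_below A"
      unfolding A_def bdd_below_def
      by (rule exI[of _ t1]) (smt (verit) mem_Collect_eq mono t1)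
    define ts where "ts = Inf A"
    have tsA: "ts \<in> A" unfolding ts_def using closed_contains_Inf Ane Aclosed Abdd by blast
    have Seq: "{t. ?F t < p} = {..<ts}"
    proof safe
      fix t assume "?F t < p"
      then show "t < ts" using tsA mono unfolding A_def by (smt (verit) mem_Collect_eq)
    next
      fix t assume "t < ts"
      then have "t \<notin> A" using cInf_lower[OF _ Abdd] ts_def by force
      then show "?F t < p" unfolding A_def by auto
    qed
    have le: "?F ts \<le> p"
    proof (rule tendsto_upperbound)
      show "(?F \<longlongrightarrow> ?F ts) (at_left ts)"
        using cont[of ts] unfolding isCont_def filterlim_at_split by blast
      show "\<forall>\<^sub>F x in at_left ts. ?F x \<le> p"
        unfolding eventually_at_left_field
      proof (intro exI[of _ "ts - 1"] conjI allI impI)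
        fix y assume "ts - 1 < y" "y < ts"
        then have "y \<in> {..<ts}" by simp
        then show "?F y \<le> p" using Seq by (metis less_imp_le mem_Collect_eq)
      qed simp
    qed simp
    have "measure \<rho> {..<ts} = ?F ts"
    proof -
      have "?F ts = measure \<rho> ({..<ts} \<union> {ts})" by (simp add: cdf_def ivl_disj_un(2)[symmetric])
      also have "\<dots> = measure \<rho> {..<ts} + measure \<rho> {ts}" by (subst finite_measure_Union) auto
      finally show ?thesis using atom by simp
    qed
    then show ?thesis using Seq le tsA A_def by simp
  qed
qed

lemma cdf_of_eq: "cdf_of = cdf"
  by (auto simp: cdf_of_def cdf_def fun_eq_iff)

locale bddist =
  fixes \<nu> :: "real measure" and R :: real
  assumes rd: "real_distribution \<nu>"
    and lo: "\<And>s. s < -R \<Longrightarrow> cdf \<nu> s = 0"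
    and hi: "\<And>s. R \<le> s \<Longrightarrow> cdf \<nu> s = 1"
begin

interpretation real_distribution \<nu> by (rule rd)

lemma set_props:
  assumes "0 \<le> u" "u < 1"
  shows "R \<in> {s. cdf \<nu> s > u}" "bdd_below {s. cdf \<nu> s > u}"
    "\<And>s. s \<in> {s. cdf \<nu> s > u} \<Longrightarrow> -R \<le> s"
proof -
  show "R \<in> {s. cdf \<nu> s > u}" using hi[of R] assms by simp
  show lb: "\<And>s. s \<in> {s. cdf \<nu> s > u} \<Longrightarrow> -R \<le> s"
    using lo assms by (metis linorder_not_le mem_Collect_eq not_less_iff_gr_or_eq)
  show "bdd_below {s. cdf \<nu> s > u}" unfolding bdd_below_def using lb by blast
qed

lemma Q_bounds:
  assumes "0 \<le> u" "u < 1"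
  shows "-R \<le> gen_inv (cdf \<nu>) u" "gen_inv (cdf \<nu>) u \<le> R"
  unfolding gen_inv_def
  using set_props[OF assms] by (auto intro!: cInf_greatest cInf_lower)

lemma Q_one:
  assumes "1 \<le> u"
  shows "gen_inv (cdf \<nu>) u = Inf {}"
proof -
  have "{s. cdf \<nu> s > u} = {}" using cdf_bounded_prob assms by (smt (verit) Collect_empty_eq)
  then show ?thesis unfolding gen_inv_def by simp
qed

lemma Q_mono:
  assumes "0 \<le> u" "u \<le> v" "v < 1"
  shows "gen_inv (cdf \<nu>) u \<le> gen_inv (cdf \<nu>) v"
  unfolding gen_inv_def
proof (rule cInf_superset_mono)
  show "{s. v < cdf \<nu> s} \<noteq> {}" using set_props(1)[of v] assms by auto
  show "bdd_below {s. u < cdf \<nu> s}" using set_props(2)[of u] assms by auto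
  show "{s. v < cdf \<nu> s} \<subseteq> {s. u < cdf \<nu> s}" using assms by auto
qed

lemma Q_le:
  assumes "0 \<le> u" "u < cdf \<nu> a"
  shows "gen_inv (cdf \<nu>) u \<le> a"
proof -
  have "u < 1" using assms cdf_bounded_prob[of a] by linarith
  then show ?thesis unfolding gen_inv_def
    using set_props[of u] assms by (auto intro!: cInf_lower)
qed

lemma Q_ge:
  assumes "measure \<nu> {..<b} \<le> u" "u < 1"
  shows "b \<le> gen_inv (cdf \<nu>) u"
  unfolding gen_inv_def
proof (rule cInf_greatest)
  have "0 \<le> u" using assms(1) measure_nonneg order_trans by blast
  then show "{s. u < cdf \<nu> s} \<noteq> {}" using set_props(1)[of u] assms by auto
  fix s assume "s \<in> {s. u < cdf \<nu> s}"
  then have s: "u < cdf \<nu> s" by simp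
  show "b \<le> s"
  proof (rule ccontr)
    assume "\<not> b \<le> s"
    then have "{..s} \<subseteq> {..<b}" by auto
    then have "cdf \<nu> s \<le> measure \<nu> {..<b}" unfolding cdf_def
      by (intro finite_measure_mono) auto
    then show False using s assms by linarith
  qed
qed

end

lemma var_lower:
  fixes g :: "real \<Rightarrow> real"
  assumes ps: "prob_space \<rho>" and gm: "g \<in> borel_measurable \<rho>" and gb: "\<And>t. \<bar>g t\<bar> \<le> B"
    and L: "L \<in> sets \<rho>" and H: "H \<in> sets \<rho>"
    and gL: "\<And>t. t \<in> L \<Longrightarrow> g t \<le> a" and gH: "\<And>t. t \<in> H \<Longrightarrow> b \<le> g t"
    and ab: "a < b" and mL: "e \<le> measure \<rho> L" and mH: "e \<le> measure \<rho> H"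
  shows "e * ((b - a) / 2)\<^sup>2 \<le> (\<integral>t. (g t - m)\<^sup>2 \<partial>\<rho>)"
proof -
  interpret prob_space \<rho> by fact
  have int: "integrable \<rho> (\<lambda>t. (g t - m)\<^sup>2)"
  proof (rule integrable_const_bound[where B="(B + \<bar>m\<bar>)\<^sup>2"])
    show "AE t in \<rho>. norm ((g t - m)\<^sup>2) \<le> (B + \<bar>m\<bar>)\<^sup>2"
    proof (rule AE_I2)
      fix t
      have "\<bar>g t - m\<bar> \<le> B + \<bar>m\<bar>" using gb[of t] by linarith
      then have "\<bar>g t - m\<bar>\<^sup>2 \<le> (B + \<bar>m\<bar>)\<^sup>2" by (intro power_mono) auto
      then show "norm ((g t - m)\<^sup>2) \<le> (B + \<bar>m\<bar>)\<^sup>2" by simp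
    qed
  qed (use gm in measurable)
  have key: "\<And>S. S \<in> sets \<rho> \<Longrightarrow> (\<forall>t\<in>S. ((b - a)/2)\<^sup>2 \<le> (g t - m)\<^sup>2) \<Longrightarrow> e \<le> measure \<rho> S
     \<Longrightarrow> e * ((b - a) / 2)\<^sup>2 \<le> (\<integral>t. (g t - m)\<^sup>2 \<partial>\<rho>)"
  proof -
    fix S assume S: "S \<in> sets \<rho>" and bnd: "\<forall>t\<in>S. ((b - a)/2)\<^sup>2 \<le> (g t - m)\<^sup>2" and me: "e \<le> measure \<rho> S"
    have "e * ((b - a) / 2)\<^sup>2 \<le> measure \<rho> S * ((b - a) / 2)\<^sup>2"
      using me by (intro mult_right_mono) auto
    also have "\<dots> = (\<integral>t. indicator S t * ((b - a) / 2)\<^sup>2 \<partial>\<rho>)"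
      using S by simp
    also have "\<dots> \<le> (\<integral>t. (g t - m)\<^sup>2 \<partial>\<rho>)"
    proof (rule integral_mono)
      show "integrable \<rho> (\<lambda>t. indicator S t * ((b - a) / 2)\<^sup>2)"
        using S by (intro integrable_mult_left) (simp add: integrable_indicator_iff emeasure_eq_measure)
      show "integrable \<rho> (\<lambda>t. (g t - m)\<^sup>2)" by (rule int)
      fix t show "indicator S t * ((b - a) / 2)\<^sup>2 \<le> (g t - m)\<^sup>2"
        using bnd by (cases "t \<in> S") auto
    qed
    finally show "e * ((b - a) / 2)\<^sup>2 \<le> (\<integral>t. (g t - m)\<^sup>2 \<partial>\<rho>)" .
  qed
  show ?thesis
  proof (cases "(a + b) / 2 \<le> m")
    case True
    show ?thesis
    proof (rule key[OF L _ mL], intro ballI)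
      fix t assume "t \<in> L"
      then have "(b - a) / 2 \<le> m - g t" using gL[OF \<open>t \<in> L\<close>] True by (simp add: field_simps)
      moreover have "0 \<le> (b - a) / 2" using ab by simp
      ultimately have "((b - a)/2)\<^sup>2 \<le> (m - g t)\<^sup>2" by (intro power_mono) auto
      then show "((b - a)/2)\<^sup>2 \<le> (g t - m)\<^sup>2" by (simp add: power2_commute)
    qed
  next
    case False
    show ?thesis
    proof (rule key[OF H _ mH], intro ballI)
      fix t assume "t \<in> H"
      then have "(b - a) / 2 \<le> g t - m" using gH[OF \<open>t \<in> H\<close>] False by (simp add: field_simps)
      moreover have "0 \<le> (b - a) / 2" using ab by simp
      ultimately show "((b - a)/2)\<^sup>2 \<le> (g t - m)\<^sup>2" by (intro power_mono) auto
    qed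
  qed
qed

lemma cdf_mono_rd: "real_distribution \<rho> \<Longrightarrow> x \<le> y \<Longrightarrow> cdf \<rho> x \<le> cdf \<rho> y"
  using finite_borel_measure.cdf_nondecreasing real_distribution.finite_borel_measure_M by blast

lemma cdf_meas: "real_distribution \<rho> \<Longrightarrow> cdf \<rho> \<in> borel_measurable borel"
  by (intro borel_measurable_mono) (simp add: mono_def cdf_mono_rd)

lemma lt1_sets: "real_distribution \<rho> \<Longrightarrow> {t. cdf \<rho> t < 1} \<in> sets borel"
  "real_distribution \<rho> \<Longrightarrow> {t. \<not> cdf \<rho> t < 1} \<in> sets borel"
  using cdf_meas[of \<rho>] by measurable

locale setting = bddist +
  fixes \<rho> :: "real measure"
  assumes rrd: "real_distribution \<rho>" and atom: "\<And>x. measure \<rho> {x} = 0"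
begin

lemma cdt_eq: "cdt \<rho> \<nu> t = gen_inv (cdf \<nu>) (cdf \<rho> t)"
  by (simp add: cdt_def cdf_of_eq)

lemma F_nonneg: "0 \<le> cdf \<rho> t"
  using finite_borel_measure.cdf_nonneg real_distribution.finite_borel_measure_M rrd by blast

lemma cdt_const: "\<not> cdf \<rho> t < 1 \<Longrightarrow> cdt \<rho> \<nu> t = Inf {}"
  unfolding cdt_eq by (rule Q_one) simp

lemma cdt_bound: "\<bar>cdt \<rho> \<nu> t\<bar> \<le> max R \<bar>Inf {}\<bar>"
proof (cases "cdf \<rho> t < 1")
  case True
  then show ?thesis using Q_bounds[OF F_nonneg True] unfolding cdt_eq by linarith
next
  case False
  then show ?thesis using cdt_const by simp
qed

lemma cdt_mono_on: "mono_on {t. cdf \<rho> t < 1} (cdt \<rho> \<nu>)"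
proof (rule mono_onI)
  fix r s assume "r \<in> {t. cdf \<rho> t < 1}" "s \<in> {t. cdf \<rho> t < 1}" "r \<le> s"
  then show "cdt \<rho> \<nu> r \<le> cdt \<rho> \<nu> s" unfolding cdt_eq
    using Q_mono F_nonneg cdf_mono_rd[OF rrd] by simp
qed

lemma cdt_meas: "cdt \<rho> \<nu> \<in> borel_measurable borel"
proof (rule borel_measurable_piecewise_mono[of "{{t. cdf \<rho> t < 1}, {t. \<not> cdf \<rho> t < 1}}"])
  fix c assume c: "c \<in> {{t. cdf \<rho> t < 1}, {t. \<not> cdf \<rho> t < 1}}"
  then show "c \<in> sets borel" using lt1_sets[OF rrd] by auto
  show "mono_on c (cdt \<rho> \<nu>)"
    using c cdt_mono_on cdt_const by (auto intro!: mono_onI dest: mono_onD)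
qed auto

lemma var_bound:
  assumes ab: "a < b" and e: "0 < e" "e \<le> cdf \<nu> a" "e \<le> 1 - measure \<nu> {..<b}"
  shows "e * ((b - a) / 2)\<^sup>2 \<le> (\<integral>t. (cdt \<rho> \<nu> t - m)\<^sup>2 \<partial>\<rho>)"
proof -
  interpret r: real_distribution \<rho> by (rule rrd)
  interpret n: real_distribution \<nu> by (rule rd)
  have sr: "sets \<rho> = sets borel" by (rule r.M_is_borel)
  let ?F = "cdf \<rho>"
  define p2 where "p2 = measure \<nu> {..<b}"
  define L where "L = {t. ?F t < cdf \<nu> a}"
  define H where "H = {t. ?F t < 1} - {t. ?F t < p2}"
  have Fm: "?F \<in> borel_measurable borel" by (rule cdf_meas[OF rrd])
  have Ls: "L \<in> sets \<rho>" unfolding L_def sr using Fm by measurable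
  have Hs: "H \<in> sets \<rho>" unfolding H_def sr using Fm by measurable
  have mL: "measure \<rho> L = cdf \<nu> a"
    unfolding L_def by (rule cdf_lt_measure[OF rrd atom]) (use e n.cdf_bounded_prob in auto)
  have m1: "measure \<rho> {t. ?F t < 1} = 1" by (rule cdf_lt_measure[OF rrd atom]) auto
  have p2lt: "p2 < 1" using e p2_def by simp
  have m2: "measure \<rho> {t. ?F t < p2} \<le> p2"
  proof (cases "0 < p2")
    case True
    then show ?thesis using cdf_lt_measure[OF rrd atom True] p2lt by simp
  next
    case False
    then have "{t. ?F t < p2} = {}" using F_nonneg by (auto simp: not_less) (smt (verit) F_nonneg)
    then show ?thesis using False p2_def by simp
  qed
  have "measure \<rho> H = measure \<rho> {t. ?F t < 1} - measure \<rho> {t. ?F t < p2}"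
    unfolding H_def
  proof (rule r.finite_measure_Diff)
    show "{t. ?F t < 1} \<in> sets \<rho>" "{t. ?F t < p2} \<in> sets \<rho>" unfolding sr using Fm by measurable
    show "{t. ?F t < p2} \<subseteq> {t. ?F t < 1}" using p2lt by auto
  qed
  then have mH: "e \<le> measure \<rho> H" using m1 m2 e p2_def by linarith
  show ?thesis
  proof (rule var_lower[where B="max R \<bar>Inf {}\<bar>" and L=L and H=H])
    show "prob_space \<rho>" by (rule r.prob_space_axioms)
    show "cdt \<rho> \<nu> \<in> borel_measurable \<rho>" using cdt_meas measurable_cong_sets[OF sr refl] by blast
    show "\<And>t. \<bar>cdt \<rho> \<nu> t\<bar> \<le> max R \<bar>Inf {}\<bar>" by (rule cdt_bound)
    show "L \<in> sets \<rho>" "H \<in> sets \<rho>" by (fact Ls, fact Hs)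
    show "\<And>t. t \<in> L \<Longrightarrow> cdt \<rho> \<nu> t \<le> a"
      unfolding L_def cdt_eq using Q_le F_nonneg by simp
    show "\<And>t. t \<in> H \<Longrightarrow> b \<le> cdt \<rho> \<nu> t"
      unfolding H_def cdt_eq using Q_ge p2_def by (simp add: not_less)
    show "a < b" by fact
    show "e \<le> measure \<rho> L" using mL e by simp
    show "e \<le> measure \<rho> H" by fact
  qed
qed

end

definition perp2 :: "real^2 \<Rightarrow> real^2" where
  "perp2 t = (\<chi> i. if i = 1 then -(t$2) else t$1)"

lemma inner2: "(v::real^2) \<bullet> w = v$1 * w$1 + v$2 * w$2"
  by (simp add: inner_vec_def sum_2)

lemma perp2_comp [simp]: "perp2 t $ 1 = -(t$2)" "perp2 t $ 2 = t$1"
  by (simp_all add: perp2_def)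

lemma perp2_nz: "(t::real^2) \<noteq> 0 \<Longrightarrow> perp2 t \<noteq> 0"
  by (auto simp: vec_eq_iff forall_2)

lemma perp_lemma:
  fixes v t :: "real^2"
  assumes t: "t \<noteq> 0" and o: "v \<bullet> t = 0"
  shows "v = ((v \<bullet> perp2 t) / (t \<bullet> t)) *\<^sub>R perp2 t"
proof -
  have n: "t \<bullet> t \<noteq> 0" using t by simp
  have o': "v$1 * t$1 = - (v$2 * t$2)" using o by (simp add: inner2)
  have c1: "v$1 * (t \<bullet> t) = (v \<bullet> perp2 t) * (-(t$2))"
  proof -
    have "v$1 * (t \<bullet> t) = (v$1 * t$1) * t$1 + v$1 * t$2 * t$2" by (simp add: inner2 algebra_simps)
    also have "\<dots> = - (v$2 * t$2) * t$1 + v$1 * t$2 * t$2" using o' by simp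
    also have "\<dots> = (v \<bullet> perp2 t) * (-(t$2))" by (simp add: inner2 algebra_simps)
    finally show ?thesis .
  qed
  have c2: "v$2 * (t \<bullet> t) = (v \<bullet> perp2 t) * (t$1)"
  proof -
    have "v$2 * (t \<bullet> t) = v$2 * t$1 * t$1 + (v$2 * t$2) * t$2" by (simp add: inner2 algebra_simps)
    also have "\<dots> = v$2 * t$1 * t$1 - (v$1 * t$1) * t$2" using o' by simp
    also have "\<dots> = (v \<bullet> perp2 t) * (t$1)" by (simp add: inner2 algebra_simps)
    finally show ?thesis .
  qed
  show ?thesis using c1 c2 n
    by (simp add: vec_eq_iff forall_2 field_simps)
qed

lemma noncollinear_sep:
  fixes K :: "(real^2) set"
  assumes "\<not> collinear K" "t \<noteq> 0"
  shows "\<exists>x\<in>K. \<exists>y\<in>K. (x - y) \<bullet> t \<noteq> 0"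
proof (rule ccontr)
  assume "\<not> ?thesis"
  then have "\<forall>x\<in>K. \<forall>y\<in>K. \<exists>c. x - y = c *\<^sub>R perp2 t"
    using perp_lemma[OF assms(2)] by blast
  then show False using assms(1) unfolding collinear_def by blast
qed

lemma aux2: "(A::real) \<le> a + b \<Longrightarrow> A/2 \<le> a \<or> A/2 \<le> b" by linarith

lemma geom:
  fixes K :: "(real^2) set"
  assumes nc: "\<not> collinear K"
  obtains x1 y1 x2 y2 D where "x1 \<in> K" "y1 \<in> K" "x2 \<in> K" "y2 \<in> K" "0 < D"
    "\<And>t. t \<in> S1 \<Longrightarrow> D \<le> \<bar>(x1 - y1) \<bullet> t\<bar> \<or> D \<le> \<bar>(x2 - y2) \<bullet> t\<bar>"
proof -
  have "(axis 1 1 :: real^2) \<noteq> 0" by (simp add: axis_eq_0_iff)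
  from noncollinear_sep[OF nc this] obtain x1 y1 where xy1: "x1 \<in> K" "y1 \<in> K" "(x1 - y1) \<bullet> axis 1 1 \<noteq> 0"
    by blast
  define d1 where "d1 = x1 - y1"
  have d1: "d1 \<noteq> 0" using xy1 d1_def by auto
  define t0 where "t0 = perp2 d1"
  have t0: "t0 \<noteq> 0" using perp2_nz[OF d1] t0_def by simp
  from noncollinear_sep[OF nc t0] obtain x2 y2 where xy2: "x2 \<in> K" "y2 \<in> K" "(x2 - y2) \<bullet> t0 \<noteq> 0"
    by blast
  define d2 where "d2 = x2 - y2"
  define g where "g = (\<lambda>t. \<bar>d1 \<bullet> t\<bar> + \<bar>d2 \<bullet> t\<bar>)"
  have S1: "S1 = sphere 0 1" by (auto simp: S1_def)
  have "continuous_on (sphere 0 1) g" unfolding g_def by (intro continuous_intros)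
  then obtain tm where tm: "tm \<in> sphere 0 1" "\<And>t. t \<in> sphere 0 1 \<Longrightarrow> g tm \<le> g t"
    using continuous_attains_inf[of "sphere (0::real^2) 1" g] by auto
  have gpos: "0 < g tm"
  proof (rule ccontr)
    assume "\<not> 0 < g tm"
    then have z1: "d1 \<bullet> tm = 0" and z2: "d2 \<bullet> tm = 0" unfolding g_def by auto
    have "tm = ((tm \<bullet> perp2 d1) / (d1 \<bullet> d1)) *\<^sub>R t0"
      using perp_lemma[OF d1, of tm] z1 t0_def by (simp add: inner_commute)
    then obtain c where c: "tm = c *\<^sub>R t0" by blast
    have "c * (d2 \<bullet> t0) = 0" using z2 c by simp
    then have "c = 0" using xy2 d2_def by simp
    then show False using c tm(1) by simp
  qed
  show ?thesis
  proof (rule that[of x1 y1 x2 y2 "g tm / 2"])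
    show "x1 \<in> K" "y1 \<in> K" "x2 \<in> K" "y2 \<in> K" using xy1 xy2 by auto
    show "0 < g tm / 2" using gpos by simp
    fix t assume "t \<in> S1"
    then have "g tm \<le> g t" using tm S1 by auto
    then show "g tm / 2 \<le> \<bar>(x1 - y1) \<bullet> t\<bar> \<or> g tm / 2 \<le> \<bar>(x2 - y2) \<bullet> t\<bar>"
      using aux2 unfolding g_def d1_def d2_def by blast
  qed
qed

lemma supp_null:
  fixes \<mu> :: "(real^2) measure"
  assumes sm: "sets \<mu> = sets borel"
  shows "- msupp \<mu> \<in> null_sets \<mu>"
proof -
  define F where "F = {ball x e | x e. 0 < e \<and> emeasure \<mu> (ball x e) = 0}"
  have Fopen: "\<And>S. S \<in> F \<Longrightarrow> open S" unfolding F_def by auto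
  have UF: "\<Union>F = - msupp \<mu>"
  proof safe
    fix z S assume "z \<in> S" "S \<in> F" "z \<in> msupp \<mu>"
    then obtain x e where S: "S = ball x e" "0 < e" "emeasure \<mu> (ball x e) = 0" unfolding F_def by blast
    have "ball z (e - dist x z) \<subseteq> ball x e"
    proof
      fix w assume "w \<in> ball z (e - dist x z)"
      then have "dist z w < e - dist x z" by simp
      moreover have "dist x w \<le> dist x z + dist z w" by (rule dist_triangle)
      ultimately show "w \<in> ball x e" by simp
    qed
    moreover have "0 < e - dist x z" using \<open>z \<in> S\<close> S(1) by simp
    moreover have "\<forall>e>0. emeasure \<mu> (ball z e) > 0" using \<open>z \<in> msupp \<mu>\<close> unfolding msupp_def by simp
    ultimately have "emeasure \<mu> (ball z (e - dist x z)) > 0" by blast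
    moreover have "emeasure \<mu> (ball z (e - dist x z)) \<le> emeasure \<mu> (ball x e)"
      by (rule emeasure_mono[OF \<open>ball z (e - dist x z) \<subseteq> ball x e\<close>]) (simp add: sm)
    ultimately show False using S(3) by simp
  next
    fix z assume "z \<notin> msupp \<mu>"
    then obtain e where "0 < e" "\<not> emeasure \<mu> (ball z e) > 0" unfolding msupp_def by blast
    then have "emeasure \<mu> (ball z e) = 0" by (simp add: not_gr_zero)
    then have "ball z e \<in> F" unfolding F_def using \<open>0 < e\<close> by blast
    then show "z \<in> \<Union>F" using \<open>0 < e\<close> centre_in_ball by blast
  qed
  obtain F' where F': "F' \<subseteq> F" "countable F'" "\<Union>F' = \<Union>F" using Lindelof[OF Fopen] by blast
  have "(\<Union>S\<in>F'. S) \<in> null_sets \<mu>"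
  proof (rule null_sets_UN')
    show "countable F'" by fact
    fix S assume "S \<in> F'"
    then have "S \<in> F" using F' by auto
    then obtain x e where S: "S = ball x e" "emeasure \<mu> (ball x e) = 0" unfolding F_def by blast
    have "ball x e \<in> sets \<mu>" using sm by simp
    then show "S \<in> null_sets \<mu>" using S by blast
  qed
  moreover have "(\<Union>S\<in>F'. S) = - msupp \<mu>" using F' UF by simp
  ultimately show ?thesis by simp
qed

lemma radon_bddist:
  fixes \<mu> :: "(real^2) measure"
  assumes ps: "prob_space \<mu>" and sm: "sets \<mu> = sets borel"
    and R: "\<And>x. x \<in> msupp \<mu> \<Longrightarrow> norm x \<le> R" and t: "t \<in> S1"
  shows "bddist (radon t \<mu>) R"
proof -
  interpret prob_space \<mu> by fact
  have sp: "space \<mu> = UNIV" using sets_eq_imp_space_eq[OF sm] by simp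
  have "(\<lambda>x. x \<bullet> t) \<in> borel_measurable borel"
    by (intro borel_measurable_continuous_onI continuous_intros)
  then have im: "(\<lambda>x. x \<bullet> t) \<in> borel_measurable \<mu>"
    using measurable_cong_sets[OF sm refl] by blast
  have hS: "\<And>A. A \<in> sets borel \<Longrightarrow> {x. x \<bullet> t \<in> A} \<in> sets \<mu>"
  proof -
    fix A :: "real set" assume "A \<in> sets borel"
    then have "(\<lambda>x. x \<bullet> t) -` A \<inter> space \<mu> \<in> sets \<mu>" by (rule measurable_sets[OF im])
    moreover have "(\<lambda>x. x \<bullet> t) -` A \<inter> space \<mu> = {x. x \<bullet> t \<in> A}" using sp by auto
    ultimately show "{x. x \<bullet> t \<in> A} \<in> sets \<mu>" by simp
  qed
  have nt: "norm t = 1" using t by (simp add: S1_def)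
  have bnd: "\<bar>x \<bullet> t\<bar> \<le> R" if "x \<in> msupp \<mu>" for x
  proof -
    have "\<bar>x \<bullet> t\<bar> \<le> norm x * norm t" by (rule Cauchy_Schwarz_ineq2)
    then show ?thesis using R[OF that] nt by simp
  qed
  have N: "- msupp \<mu> \<in> null_sets \<mu>" by (rule supp_null[OF sm])
  have cdf_eq: "\<And>s. cdf (radon t \<mu>) s = measure \<mu> {x. x \<bullet> t \<le> s}"
  proof -
    fix s
    have "cdf (radon t \<mu>) s = measure \<mu> ((\<lambda>x. x \<bullet> t) -` {..s} \<inter> space \<mu>)"
      unfolding cdf_def radon_def by (rule measure_distr[OF im]) simp
    also have "(\<lambda>x. x \<bullet> t) -` {..s} \<inter> space \<mu> = {x. x \<bullet> t \<le> s}" using sp by auto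
    finally show "cdf (radon t \<mu>) s = measure \<mu> {x. x \<bullet> t \<le> s}" .
  qed
  show ?thesis
  proof (rule bddist.intro)
    show "real_distribution (radon t \<mu>)" unfolding radon_def using im by (rule real_distribution_distr)
    fix s
    show "s < - R \<Longrightarrow> cdf (radon t \<mu>) s = 0"
    proof -
      assume s: "s < -R"
      have "{x. x \<bullet> t \<le> s} \<in> null_sets \<mu>"
      proof (rule null_sets_subset[OF N])
        show "{x. x \<bullet> t \<le> s} \<in> sets \<mu>" using hS[of "{..s}"] by simp
        show "{x. x \<bullet> t \<le> s} \<subseteq> - msupp \<mu>"
        proof
          fix x assume "x \<in> {x. x \<bullet> t \<le> s}"
          then have "x \<bullet> t \<le> s" by simp
          then show "x \<in> - msupp \<mu>" using bnd[of x] s by (auto simp: abs_le_iff)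
        qed
      qed
      then show ?thesis using cdf_eq by (simp add: measure_def null_setsD1)
    qed
    show "R \<le> s \<Longrightarrow> cdf (radon t \<mu>) s = 1"
    proof -
      assume s: "R \<le> s"
      have A: "{x. s < x \<bullet> t} \<in> null_sets \<mu>"
      proof (rule null_sets_subset[OF N])
        show "{x. s < x \<bullet> t} \<in> sets \<mu>" using hS[of "{s<..}"] by simp
        show "{x. s < x \<bullet> t} \<subseteq> - msupp \<mu>"
        proof
          fix x assume "x \<in> {x. s < x \<bullet> t}"
          then have "s < x \<bullet> t" by simp
          then show "x \<in> - msupp \<mu>" using bnd[of x] s by (auto simp: abs_le_iff)
        qed
      qed
      have eq: "{x. x \<bullet> t \<le> s} = space \<mu> - {x. s < x \<bullet> t}" using sp by auto
      have As: "{x. s < x \<bullet> t} \<in> sets \<mu>" using A by blast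
      have "measure \<mu> {x. x \<bullet> t \<le> s} = 1 - measure \<mu> {x. s < x \<bullet> t}"
        by (simp only: eq prob_compl[OF As])
      then show ?thesis using cdf_eq A by (simp add: measure_def null_setsD1)
    qed
  qed
qed

lemma radon_basic:
  fixes \<mu> :: "(real^2) measure"
  assumes ps: "prob_space \<mu>" and sm: "sets \<mu> = sets borel"
  shows "\<And>A. A \<in> sets borel \<Longrightarrow> {x. x \<bullet> t \<in> A} \<in> sets \<mu>"
    and "\<And>A. A \<in> sets borel \<Longrightarrow> measure (radon t \<mu>) A = measure \<mu> {x. x \<bullet> t \<in> A}"
proof -
  have sp: "space \<mu> = UNIV" using sets_eq_imp_space_eq[OF sm] by simp
  have "(\<lambda>x. x \<bullet> t) \<in> borel_measurable borel"
    by (intro borel_measurable_continuous_onI continuous_intros)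
  then have im: "(\<lambda>x. x \<bullet> t) \<in> borel_measurable \<mu>"
    using measurable_cong_sets[OF sm refl] by blast
  fix A :: "real set" assume A: "A \<in> sets borel"
  have eq: "(\<lambda>x. x \<bullet> t) -` A \<inter> space \<mu> = {x. x \<bullet> t \<in> A}" using sp by auto
  have "(\<lambda>x. x \<bullet> t) -` A \<inter> space \<mu> \<in> sets \<mu>" using A by (rule measurable_sets[OF im])
  then show "{x. x \<bullet> t \<in> A} \<in> sets \<mu>" using eq by simp
  have "measure (radon t \<mu>) A = measure \<mu> ((\<lambda>x. x \<bullet> t) -` A \<inter> space \<mu>)"
    unfolding radon_def by (rule measure_distr[OF im]) (use A in simp)
  then show "measure (radon t \<mu>) A = measure \<mu> {x. x \<bullet> t \<in> A}" using eq by simp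
qed

lemma radon_lo:
  fixes \<mu> :: "(real^2) measure"
  assumes ps: "prob_space \<mu>" and sm: "sets \<mu> = sets borel" and t: "norm t = 1"
  shows "measure \<mu> (ball x r) \<le> cdf (radon t \<mu>) (x \<bullet> t + r)"
proof -
  interpret prob_space \<mu> by fact
  have "cdf (radon t \<mu>) (x \<bullet> t + r) = measure \<mu> {z. z \<bullet> t \<in> {..x \<bullet> t + r}}"
    unfolding cdf_def by (rule radon_basic(2)[OF ps sm]) simp
  also have "measure \<mu> (ball x r) \<le> \<dots>"
  proof (rule finite_measure_mono)
    show "ball x r \<subseteq> {z. z \<bullet> t \<in> {..x \<bullet> t + r}}"
    proof
      fix z assume "z \<in> ball x r"
      then have d: "norm (z - x) < r" by (simp add: dist_norm norm_minus_commute)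
      have "(z - x) \<bullet> t \<le> norm (z - x) * norm t" using Cauchy_Schwarz_ineq2[of "z - x" t] abs_ge_self[of "(z - x) \<bullet> t"] by linarith
      then have "z \<bullet> t - x \<bullet> t \<le> norm (z - x)" using t by (simp add: inner_diff_left)
      then show "z \<in> {z. z \<bullet> t \<in> {..x \<bullet> t + r}}" using d by simp
    qed
    show "{z. z \<bullet> t \<in> {..x \<bullet> t + r}} \<in> events" by (rule radon_basic(1)[OF ps sm]) simp
  qed
  finally show ?thesis .
qed

lemma radon_hi:
  fixes \<mu> :: "(real^2) measure"
  assumes ps: "prob_space \<mu>" and sm: "sets \<mu> = sets borel" and t: "norm t = 1"
  shows "measure \<mu> (ball y r) \<le> 1 - measure (radon t \<mu>) {..<y \<bullet> t - r}"
proof -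
  interpret prob_space \<mu> by fact
  have sp: "space \<mu> = UNIV" using sets_eq_imp_space_eq[OF sm] by simp
  let ?A = "{z. z \<bullet> t \<in> {..<y \<bullet> t - r}}"
  have As: "?A \<in> events" by (rule radon_basic(1)[OF ps sm]) simp
  have "measure (radon t \<mu>) {..<y \<bullet> t - r} = measure \<mu> ?A"
    by (rule radon_basic(2)[OF ps sm]) simp
  moreover have "measure \<mu> (space \<mu> - ?A) = 1 - measure \<mu> ?A" by (rule prob_compl[OF As])
  moreover have "measure \<mu> (ball y r) \<le> measure \<mu> (space \<mu> - ?A)"
  proof (rule finite_measure_mono)
    show "ball y r \<subseteq> space \<mu> - ?A"
    proof
      fix z assume "z \<in> ball y r"
      then have d: "norm (y - z) < r" by (simp add: dist_norm)
      have "(y - z) \<bullet> t \<le> norm (y - z) * norm t" using Cauchy_Schwarz_ineq2[of "y - z" t] abs_ge_self[of "(y - z) \<bullet> t"] by linarith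
      then have "y \<bullet> t - z \<bullet> t \<le> norm (y - z)" using t by (simp add: inner_diff_left)
      then show "z \<in> space \<mu> - ?A" using d sp by simp
    qed
    show "space \<mu> - ?A \<in> events" using As by blast
  qed
  ultimately show ?thesis by simp
qed

context setting
begin

lemma cdt_integrable: "integrable \<rho> (cdt \<rho> \<nu>)"
proof -
  interpret r: real_distribution \<rho> by (rule rrd)
  show ?thesis
  proof (rule r.integrable_const_bound[where B="max R \<bar>Inf {}\<bar>"])
    show "AE x in \<rho>. norm (cdt \<rho> \<nu> x) \<le> max R \<bar>Inf {}\<bar>" using cdt_bound by simp
    show "cdt \<rho> \<nu> \<in> borel_measurable \<rho>" using cdt_meas measurable_cong_sets[OF r.events_eq_borel refl] by blast
  qed
qed

lemma mean_bound: "\<bar>mean_rho \<rho> (cdt \<rho> \<nu>)\<bar> \<le> max R \<bar>Inf {}\<bar>"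
proof -
  interpret r: real_distribution \<rho> by (rule rrd)
  have "mean_rho \<rho> (cdt \<rho> \<nu>) \<le> max R \<bar>Inf {}\<bar>" unfolding mean_rho_def
    by (rule r.integral_le_const[OF cdt_integrable]) (use cdt_bound abs_le_D1 in blast)
  moreover have "- max R \<bar>Inf {}\<bar> \<le> mean_rho \<rho> (cdt \<rho> \<nu>)" unfolding mean_rho_def
    by (rule r.integral_ge_const[OF cdt_integrable]) (rule AE_I2, use cdt_bound in \<open>smt (verit)\<close>)
  ultimately show ?thesis by linarith
qed

lemma std_lower:
  assumes "a < b" "0 < e" "e \<le> cdf \<nu> a" "e \<le> 1 - measure \<nu> {..<b}"
  shows "sqrt e * ((b - a) / 2) \<le> std_rho \<rho> (cdt \<rho> \<nu>)"
proof -
  have "e * ((b - a) / 2)\<^sup>2 \<le> (\<integral>t. (cdt \<rho> \<nu> t - mean_rho \<rho> (cdt \<rho> \<nu>))\<^sup>2 \<partial>\<rho>)"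
    by (rule var_bound[OF assms])
  then have "sqrt (e * ((b - a) / 2)\<^sup>2) \<le> std_rho \<rho> (cdt \<rho> \<nu>)"
    unfolding std_rho_def by (rule real_sqrt_le_mono)
  moreover have "sqrt (e * ((b - a) / 2)\<^sup>2) = sqrt e * ((b - a) / 2)"
    using assms(1) by (simp add: real_sqrt_mult)
  ultimately show ?thesis by simp
qed

lemma N_bound:
  assumes "0 < \<sigma>" "\<sigma> \<le> std_rho \<rho> (cdt \<rho> \<nu>)"
  shows "\<bar>(cdt \<rho> \<nu> t - mean_rho \<rho> (cdt \<rho> \<nu>)) / std_rho \<rho> (cdt \<rho> \<nu>)\<bar> \<le> 2 * max R \<bar>Inf {}\<bar> / \<sigma>"
proof -
  let ?s = "std_rho \<rho> (cdt \<rho> \<nu>)"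
  have num: "\<bar>cdt \<rho> \<nu> t - mean_rho \<rho> (cdt \<rho> \<nu>)\<bar> \<le> 2 * max R \<bar>Inf {}\<bar>"
    using cdt_bound[of t] mean_bound by linarith
  have sp: "0 < ?s" using assms by linarith
  have "\<bar>(cdt \<rho> \<nu> t - mean_rho \<rho> (cdt \<rho> \<nu>)) / ?s\<bar> = \<bar>cdt \<rho> \<nu> t - mean_rho \<rho> (cdt \<rho> \<nu>)\<bar> / ?s"
    using sp by simp
  also have "\<dots> \<le> 2 * max R \<bar>Inf {}\<bar> / ?s" using num sp by (simp add: divide_right_mono)
  also have "\<dots> \<le> 2 * max R \<bar>Inf {}\<bar> / \<sigma>"
    using assms by (intro divide_left_mono) auto
  finally show ?thesis .
qed

lemma N_mono_on:
  "mono_on {t. cdf \<rho> t < 1} (\<lambda>t. (cdt \<rho> \<nu> t - mean_rho \<rho> (cdt \<rho> \<nu>)) / std_rho \<rho> (cdt \<rho> \<nu>))"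
proof (rule mono_onI)
  fix r s assume "r \<in> {t. cdf \<rho> t < 1}" "s \<in> {t. cdf \<rho> t < 1}" "r \<le> s"
  then have "cdt \<rho> \<nu> r \<le> cdt \<rho> \<nu> s" using mono_onD[OF cdt_mono_on] by blast
  moreover have "0 \<le> std_rho \<rho> (cdt \<rho> \<nu>)" unfolding std_rho_def by simp
  ultimately show "(cdt \<rho> \<nu> r - mean_rho \<rho> (cdt \<rho> \<nu>)) / std_rho \<rho> (cdt \<rho> \<nu>)
      \<le> (cdt \<rho> \<nu> s - mean_rho \<rho> (cdt \<rho> \<nu>)) / std_rho \<rho> (cdt \<rho> \<nu>)"
    by (intro divide_right_mono) auto
qed

end

theorem proposition7:
  fixes \<rho> :: "real measure" and \<mu> :: "(real^2) measure"
  assumes "prob_space \<rho>" and "sets \<rho> = sets borel"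
    and "\<And>x. measure \<rho> {x} = 0"
    and "\<mu> \<in> Pc_star"
  shows "Linf \<rho> (Nmax \<rho> \<mu>)"
proof -
  have rrd: "real_distribution \<rho>"
    using assms(1,2) by (intro real_distribution.intro real_distribution_axioms.intro)
  have atom: "\<And>x. measure \<rho> {x} = 0" by fact
  have psm: "prob_space \<mu>" and sm: "sets \<mu> = sets borel" and cK: "compact (msupp \<mu>)"
    and adK: "aff_dim (msupp \<mu>) > 1"
    using assms(4) unfolding Pc_star_def by auto
  interpret pm: prob_space \<mu> by (rule psm)
  define K where "K = msupp \<mu>"
  have "bounded K" using cK compact_imp_bounded K_def by blast
  then obtain R where R: "\<And>x. x \<in> K \<Longrightarrow> norm x \<le> R" unfolding bounded_iff by blast
  have nc: "\<not> collinear K" unfolding K_def collinear_aff_dim using adK by linarith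
  obtain x1 y1 x2 y2 D where pts: "x1 \<in> K" "y1 \<in> K" "x2 \<in> K" "y2 \<in> K" and D: "0 < D"
    and sep: "\<And>t. t \<in> S1 \<Longrightarrow> D \<le> \<bar>(x1 - y1) \<bullet> t\<bar> \<or> D \<le> \<bar>(x2 - y2) \<bullet> t\<bar>"
    using geom[OF nc] by blast
  define r where "r = D / 4"
  have r: "0 < r" using D r_def by simp
  have mpos: "0 < measure \<mu> (ball p r)" if "p \<in> K" for p
  proof -
    have "0 < emeasure \<mu> (ball p r)" using that r unfolding K_def msupp_def by blast
    then show ?thesis by (simp add: pm.emeasure_eq_measure)
  qed
  define e where "e = Min ((\<lambda>p. measure \<mu> (ball p r)) ` {x1, y1, x2, y2})"
  have epos: "0 < e" unfolding e_def using mpos pts by (subst Min_gr_iff) auto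
  have ele: "e \<le> measure \<mu> (ball p r)" if "p \<in> {x1, y1, x2, y2}" for p
    unfolding e_def using that by (intro Min_le) auto
  have pair: "\<exists>x y. e \<le> measure \<mu> (ball x r) \<and> e \<le> measure \<mu> (ball y r) \<and> D \<le> (y - x) \<bullet> t"
    if "t \<in> S1" for t
  proof -
    have ex: "\<exists>x y. x \<in> {x1, y1, x2, y2} \<and> y \<in> {x1, y1, x2, y2} \<and> D \<le> (y - x) \<bullet> t"
    proof (cases "D \<le> \<bar>(x1 - y1) \<bullet> t\<bar>")
      case True
      then have "D \<le> (x1 - y1) \<bullet> t \<or> D \<le> (y1 - x1) \<bullet> t"
        by (auto simp: abs_if inner_diff_left split: if_splits)
      then show ?thesis by blast
    next
      case False
      then have "D \<le> \<bar>(x2 - y2) \<bullet> t\<bar>" using sep[OF that] by blast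
      then have "D \<le> (x2 - y2) \<bullet> t \<or> D \<le> (y2 - x2) \<bullet> t"
        by (auto simp: abs_if inner_diff_left split: if_splits)
      then show ?thesis by blast
    qed
    then show ?thesis using ele by blast
  qed
  define B where "B = max R \<bar>Inf ({}::real set)\<bar>"
  define \<sigma> where "\<sigma> = sqrt e * (D / 4)"
  have \<sigma>: "0 < \<sigma>" unfolding \<sigma>_def using epos D by (intro mult_pos_pos) auto
  define C where "C = 2 * B / \<sigma>"
  have setting: "setting (radon t \<mu>) R \<rho>" if "t \<in> S1" for t
  proof (rule setting.intro)
    show "bddist (radon t \<mu>) R" using radon_bddist[OF psm sm _ that] R K_def by blast
    show "setting_axioms \<rho>" using rrd atom by (intro setting_axioms.intro)
  qed
  have std: "\<sigma> \<le> std_rho \<rho> (cdt \<rho> (radon t \<mu>))" if t: "t \<in> S1" for t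
  proof -
    interpret s: setting "radon t \<mu>" R \<rho> by (rule setting[OF t])
    have nt: "norm t = 1" using t by (simp add: S1_def)
    obtain x y where xy: "e \<le> measure \<mu> (ball x r)" "e \<le> measure \<mu> (ball y r)" "D \<le> (y - x) \<bullet> t"
      using pair[OF t] by blast
    define a where "a = x \<bullet> t + r"
    define b where "b = y \<bullet> t - r"
    have ab: "D / 2 \<le> b - a" using xy(3) unfolding a_def b_def r_def by (simp add: inner_diff_left)
    have "sqrt e * ((b - a) / 2) \<le> std_rho \<rho> (cdt \<rho> (radon t \<mu>))"
    proof (rule s.std_lower)
      show "a < b" using ab D by simp
      show "0 < e" by (rule epos)
      show "e \<le> cdf (radon t \<mu>) a" unfolding a_def using radon_lo[OF psm sm nt, of x r] xy(1) by simp
      show "e \<le> 1 - measure (radon t \<mu>) {..<b}" unfolding b_def using radon_hi[OF psm sm nt, of y r] xy(2) by simp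
    qed
    moreover have "\<sigma> \<le> sqrt e * ((b - a) / 2)" unfolding \<sigma>_def
      using ab epos by (intro mult_left_mono) auto
    ultimately show ?thesis by simp
  qed
  have Nb: "\<bar>Ntheta \<rho> t \<mu> s\<bar> \<le> C" if t: "t \<in> S1" for t s
  proof -
    interpret s: setting "radon t \<mu>" R \<rho> by (rule setting[OF t])
    show ?thesis unfolding Ntheta_def C_def B_def by (rule s.N_bound[OF \<sigma> std[OF t]])
  qed
  have S1ne: "S1 \<noteq> {}"
  proof -
    have "axis 1 1 \<in> S1" by (simp add: S1_def)
    then show ?thesis by blast
  qed
  have Nmax_bound: "- ereal C \<le> Nmax \<rho> \<mu> s \<and> Nmax \<rho> \<mu> s \<le> ereal C" for s
  proof
    show "Nmax \<rho> \<mu> s \<le> ereal C" unfolding Nmax_def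
      by (rule SUP_least) (use Nb abs_le_D1 in auto)
    obtain t0 where t0: "t0 \<in> S1" using S1ne by blast
    have "- ereal C \<le> ereal (Ntheta \<rho> t0 \<mu> s)" using Nb[OF t0, of s] by simp
    also have "\<dots> \<le> Nmax \<rho> \<mu> s" unfolding Nmax_def using t0 by (rule SUP_upper)
    finally show "- ereal C \<le> Nmax \<rho> \<mu> s" .
  qed
  have fin: "Nmax \<rho> \<mu> s = ereal (real_of_ereal (Nmax \<rho> \<mu> s))" for s
    using Nmax_bound[of s] by (cases "Nmax \<rho> \<mu> s") auto
  define g where "g = (\<lambda>s. real_of_ereal (Nmax \<rho> \<mu> s))"
  have gmono: "mono_on {t. cdf \<rho> t < 1} g"
  proof (rule mono_onI)
    fix u v assume uv: "u \<in> {t. cdf \<rho> t < 1}" "v \<in> {t. cdf \<rho> t < 1}" "u \<le> v"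
    have "Nmax \<rho> \<mu> u \<le> Nmax \<rho> \<mu> v" unfolding Nmax_def
    proof (rule SUP_mono)
      fix t assume t: "t \<in> S1"
      interpret s: setting "radon t \<mu>" R \<rho> by (rule setting[OF t])
      have "ereal (Ntheta \<rho> t \<mu> u) \<le> ereal (Ntheta \<rho> t \<mu> v)"
        unfolding Ntheta_def using mono_onD[OF s.N_mono_on uv] by simp
      then show "\<exists>m\<in>S1. ereal (Ntheta \<rho> t \<mu> u) \<le> ereal (Ntheta \<rho> m \<mu> v)" using t by blast
    qed
    then show "g u \<le> g v" unfolding g_def using fin[of u] fin[of v] by (metis ereal_less_eq(3))
  qed
  have gconst: "mono_on {t. \<not> cdf \<rho> t < 1} g"
  proof (rule mono_onI)
    fix u v assume uv: "u \<in> {t. \<not> cdf \<rho> t < 1}" "v \<in> {t. \<not> cdf \<rho> t < 1}" "u \<le> v"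
    have "Ntheta \<rho> t \<mu> u = Ntheta \<rho> t \<mu> v" if t: "t \<in> S1" for t
    proof -
      interpret s: setting "radon t \<mu>" R \<rho> by (rule setting[OF t])
      show ?thesis unfolding Ntheta_def using s.cdt_const uv by simp
    qed
    then have "Nmax \<rho> \<mu> u = Nmax \<rho> \<mu> v" unfolding Nmax_def by (intro SUP_cong) auto
    then show "g u \<le> g v" unfolding g_def by simp
  qed
  have gm: "g \<in> borel_measurable borel"
  proof (rule borel_measurable_piecewise_mono[of "{{t. cdf \<rho> t < 1}, {t. \<not> cdf \<rho> t < 1}}"])
    fix c assume c: "c \<in> {{t. cdf \<rho> t < 1}, {t. \<not> cdf \<rho> t < 1}}"
    then show "c \<in> sets borel" using lt1_sets[OF rrd] by auto
    show "mono_on c g" using c gmono gconst by auto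
  qed auto
  have "Nmax \<rho> \<mu> = (\<lambda>s. ereal (g s))" using fin g_def by auto
  moreover have "(\<lambda>s. ereal (g s)) \<in> borel_measurable \<rho>"
    using borel_measurable_ereal[OF gm] measurable_cong_sets[OF assms(2) refl] by blast
  ultimately have meas: "Nmax \<rho> \<mu> \<in> borel_measurable \<rho>" by simp
  have "AE s in \<rho>. \<bar>Nmax \<rho> \<mu> s\<bar> \<le> ereal C"
  proof (rule AE_I2)
    fix s show "\<bar>Nmax \<rho> \<mu> s\<bar> \<le> ereal C"
      using Nmax_bound[of s] by (intro ereal_abs_leI) (auto simp: ereal_uminus_le_reorder)
  qed
  then show ?thesis unfolding Linf_def using meas by blast
qed

end
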